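(* Let $(\mathcal X,\mathcal B,\pi)$ be a measure space with $\pi$ $\sigma$-finite, $r:\mathcal X\to\mathbb R$ measurable, $\{\varepsilon(x)\}$ a real-valued random field with i.i.d. copies $\varepsilon_1,\dots,\varepsilon_K$, $K$ a finite integer $\ge2$, and $p\in\mathcal P_\pi$. Let $X_1,\dots,X_K$ be i.i.d. with density $p$, independent of the noise, and let $\widehat X=X_I$ be the Plackett–Luce curated sample. Then for every measurable $f$ with $\mathbb E_{X\sim p}|f(X)|<\infty$, $$\mathbb E[f(\widehat X)]=\mathbb E_{X\sim p}\bigl[f(X)H^K_p(X)\bigr].$$ Consequently, the density of $\widehat X$ w.r.t. $\pi$ is $pH^K_p$.
   Context: $\mathcal P_\pi$ = probability densities w.r.t. $\pi$. Plackett–Luce curation: with $\tilde w_k=e^{r(X_k)+\varepsilon_k(X_k)}$, the index $I\in\{1,\dots,K\}$ is drawn with $\mathbb P(I=k\mid X_{1:K},\varepsilon_{1:K})=\tilde w_k/\sum_{i=1}^K\tilde w_i$. The choice kernel is $H^K_p(x):=\mathbb E\bigl[K e^{r(x)+\varepsilon(x)}/(e^{r(x)+\varepsilon(x)}+\sum_{k=1}^{K-1}e^{r(X_k)+\varepsilon_k(X_k)})\bigr]$ with $X_1,\dots,X_{K-1}$ i.i.d. with density $p$ and $\varepsilon,\varepsilon_1,\dots,\varepsilon_{K-1}$ i.i.d. copies of the noise field, all independent. *)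

theory Defs
  imports "HOL-Probability.Probability"
begin

definition prob_densities :: "'a measure \<Rightarrow> ('a \<Rightarrow> real) set" where
  "prob_densities M = {p. p \<in> borel_measurable M \<and> (\<forall>x\<in>space M. 0 \<le> p x)
      \<and> integrable M p \<and> integral\<^sup>L M p = 1}"

text \<open>Plackett--Luce weight exp(r(x) + eps(x)); the noise field is
  eps(x) = e u x with latent noise u drawn from the noise law N.\<close>
definition pl_weight :: "('a \<Rightarrow> real) \<Rightarrow> ('u \<Rightarrow> 'a \<Rightarrow> real) \<Rightarrow> 'u \<Rightarrow> 'a \<Rightarrow> real" where
  "pl_weight r e u x = exp (r x + e u x)"

text \<open>Choice kernel H^K_p(x): expectation over an independent copy eps of the noise,
  X_1..X_{K-1} i.i.d. with density p, and eps_1..eps_{K-1} i.i.d. noise copies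
  (indices 0..K-2).\<close>
definition choice_kernel ::
  "nat \<Rightarrow> 'a measure \<Rightarrow> 'u measure \<Rightarrow> ('a \<Rightarrow> real) \<Rightarrow> ('u \<Rightarrow> 'a \<Rightarrow> real)
     \<Rightarrow> ('a \<Rightarrow> real) \<Rightarrow> 'a \<Rightarrow> real" where
  "choice_kernel K M N r e p x =
     (\<integral>z. (case z of (u, xs, us) \<Rightarrow>
            real K * pl_weight r e u x /
              (pl_weight r e u x + (\<Sum>k<K - 1. pl_weight r e (us k) (xs k))))
       \<partial>(N \<Otimes>\<^sub>M (PiM {..<K - 1} (\<lambda>_. density M (\<lambda>y. ennreal (p y)))
                 \<Otimes>\<^sub>M PiM {..<K - 1} (\<lambda>_. N))))"

end

theory Submission
  imports Defs
begin



lemma rearr: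
  assumes pA: "prob_space A" and pB: "prob_space B" and pC: "prob_space C" and pD: "prob_space D"
  shows "distr (A \<Otimes>\<^sub>M (B \<Otimes>\<^sub>M (C \<Otimes>\<^sub>M D))) ((A \<Otimes>\<^sub>M C) \<Otimes>\<^sub>M (B \<Otimes>\<^sub>M D))
           (\<lambda>(a,b,c,d). ((a,c),(b,d))) = (A \<Otimes>\<^sub>M C) \<Otimes>\<^sub>M (B \<Otimes>\<^sub>M D)"
proof (rule pair_measure_eqI[symmetric])
  interpret A: prob_space A by fact
  interpret B: prob_space B by fact
  interpret C: prob_space C by fact
  interpret D: prob_space D by fact
  interpret AC: prob_space "A \<Otimes>\<^sub>M C" by (intro prob_space_pair pA pC)
  interpret BD: prob_space "B \<Otimes>\<^sub>M D" by (intro prob_space_pair pB pD)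
  interpret CD: prob_space "C \<Otimes>\<^sub>M D" by (intro prob_space_pair pC pD)
  interpret BCD: prob_space "B \<Otimes>\<^sub>M (C \<Otimes>\<^sub>M D)" by (intro prob_space_pair pB pC pD)
  interpret BC: pair_sigma_finite B C ..
  show "sigma_finite_measure (A \<Otimes>\<^sub>M C)" "sigma_finite_measure (B \<Otimes>\<^sub>M D)" by unfold_locales
  show "sets ((A \<Otimes>\<^sub>M C) \<Otimes>\<^sub>M (B \<Otimes>\<^sub>M D)) = sets (distr (A \<Otimes>\<^sub>M (B \<Otimes>\<^sub>M (C \<Otimes>\<^sub>M D))) ((A \<Otimes>\<^sub>M C) \<Otimes>\<^sub>M (B \<Otimes>\<^sub>M D))
           (\<lambda>(a,b,c,d). ((a,c),(b,d))))" by simp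
  fix X Y assume X[measurable]: "X \<in> sets (A \<Otimes>\<^sub>M C)" and Y[measurable]: "Y \<in> sets (B \<Otimes>\<^sub>M D)"
  have "emeasure (distr (A \<Otimes>\<^sub>M (B \<Otimes>\<^sub>M (C \<Otimes>\<^sub>M D))) ((A \<Otimes>\<^sub>M C) \<Otimes>\<^sub>M (B \<Otimes>\<^sub>M D))
           (\<lambda>(a,b,c,d). ((a,c),(b,d)))) (X \<times> Y)
     = (\<integral>\<^sup>+ z. indicator (X \<times> Y) z \<partial>distr (A \<Otimes>\<^sub>M (B \<Otimes>\<^sub>M (C \<Otimes>\<^sub>M D))) ((A \<Otimes>\<^sub>M C) \<Otimes>\<^sub>M (B \<Otimes>\<^sub>M D))
           (\<lambda>(a,b,c,d). ((a,c),(b,d))))"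
    by (simp add: nn_integral_indicator)
  also have "\<dots> = (\<integral>\<^sup>+ z. indicator X (fst z, fst (snd (snd z))) * indicator Y (fst (snd z), snd (snd (snd z)))
       \<partial>(A \<Otimes>\<^sub>M (B \<Otimes>\<^sub>M (C \<Otimes>\<^sub>M D))))"
    by (subst nn_integral_distr) (auto intro!: nn_integral_cong simp: indicator_times split: prod.splits)
  also have "\<dots> = (\<integral>\<^sup>+ a. \<integral>\<^sup>+ z. indicator X (a, fst (snd z)) * indicator Y (fst z, snd (snd z))
       \<partial>(B \<Otimes>\<^sub>M (C \<Otimes>\<^sub>M D)) \<partial>A)"
    by (subst BCD.nn_integral_fst[symmetric]) auto
  also have "\<dots> = (\<integral>\<^sup>+ a. \<integral>\<^sup>+ b. \<integral>\<^sup>+ c. \<integral>\<^sup>+ d. indicator X (a, c) * indicator Y (b, d)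
       \<partial>D \<partial>C \<partial>B \<partial>A)"
    by (intro nn_integral_cong, subst CD.nn_integral_fst[symmetric], simp,
        intro nn_integral_cong, subst D.nn_integral_fst[symmetric], simp_all)
  also have "\<dots> = (\<integral>\<^sup>+ a. \<integral>\<^sup>+ b. \<integral>\<^sup>+ c. indicator X (a, c) * \<integral>\<^sup>+ d. indicator Y (b, d)
       \<partial>D \<partial>C \<partial>B \<partial>A)"
    by (intro nn_integral_cong nn_integral_cmult) simp
  also have "\<dots> = (\<integral>\<^sup>+ a. \<integral>\<^sup>+ c. \<integral>\<^sup>+ b. indicator X (a, c) * \<integral>\<^sup>+ d. indicator Y (b, d)
       \<partial>D \<partial>B \<partial>C \<partial>A)"
    by (rule nn_integral_cong, rule BC.Fubini'[symmetric]) simp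
  also have "\<dots> = (\<integral>\<^sup>+ a. \<integral>\<^sup>+ c. indicator X (a, c) * \<integral>\<^sup>+ b. \<integral>\<^sup>+ d. indicator Y (b, d)
       \<partial>D \<partial>B \<partial>C \<partial>A)"
    by (intro nn_integral_cong nn_integral_cmult) simp
  also have "\<dots> = (\<integral>\<^sup>+ a. \<integral>\<^sup>+ c. indicator X (a, c) * emeasure (B \<Otimes>\<^sub>M D) Y \<partial>C \<partial>A)"
    by (subst D.nn_integral_fst) (simp_all add: nn_integral_indicator)
  also have "\<dots> = (\<integral>\<^sup>+ a. (\<integral>\<^sup>+ c. indicator X (a, c) \<partial>C) * emeasure (B \<Otimes>\<^sub>M D) Y \<partial>A)"
    by (intro nn_integral_cong nn_integral_multc) simp
  also have "\<dots> = (\<integral>\<^sup>+ a. \<integral>\<^sup>+ c. indicator X (a, c) \<partial>C \<partial>A) * emeasure (B \<Otimes>\<^sub>M D) Y"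
    by (rule nn_integral_multc) simp
  also have "\<dots> = emeasure (A \<Otimes>\<^sub>M C) X * emeasure (B \<Otimes>\<^sub>M D) Y"
    by (subst C.nn_integral_fst) (simp_all add: nn_integral_indicator)
  finally show "emeasure (A \<Otimes>\<^sub>M C) X * emeasure (B \<Otimes>\<^sub>M D) Y = emeasure (distr (A \<Otimes>\<^sub>M (B \<Otimes>\<^sub>M (C \<Otimes>\<^sub>M D))) ((A \<Otimes>\<^sub>M C) \<Otimes>\<^sub>M (B \<Otimes>\<^sub>M D))
           (\<lambda>(a,b,c,d). ((a,c),(b,d)))) (X \<times> Y)" by simp
qed



definition insat :: "nat \<Rightarrow> nat \<Rightarrow> 'b \<Rightarrow> (nat \<Rightarrow> 'b) \<Rightarrow> nat \<Rightarrow> 'b" where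
  "insat K k y xs = (\<lambda>j\<in>{..<K}. if j = k then y else xs (if j < k then j else j - 1))"

lemma insat_L1:
  assumes Q: "prob_space Q" and k: "k < Suc n"
  shows "distr (Q \<Otimes>\<^sub>M PiM {..<n} (\<lambda>_. Q)) (PiM {..<Suc n} (\<lambda>_. Q)) (\<lambda>(y,xs). insat (Suc n) k y xs)
         = PiM {..<Suc n} (\<lambda>_. Q)"
proof -
  interpret Q: prob_space Q by fact
  define I' where "I' = {..<Suc n} - {k}"
  define fi where "fi = (\<lambda>j::nat. if j < k then j else j - 1)"
  have ins: "insert k I' = {..<Suc n}" using k by (auto simp: I'_def)
  have inj: "inj_on fi I'" unfolding inj_on_def fi_def I'_def by auto
  have fiI: "fi \<in> I' \<rightarrow> {..<n}" unfolding fi_def I'_def using k by (force split: if_splits)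
  have h1: "distr (PiM {..<n} (\<lambda>_. Q)) (PiM I' (\<lambda>_. Q)) (\<lambda>\<omega>. \<lambda>j\<in>I'. \<omega> (fi j)) = PiM I' (\<lambda>_. Q)"
    using distr_PiM_reindex[of "{..<n}" "\<lambda>_. Q" fi I'] inj fiI Q by simp
  have h2: "distr (Q \<Otimes>\<^sub>M PiM I' (\<lambda>_. Q)) (PiM {..<Suc n} (\<lambda>_. Q)) (\<lambda>(x, X). X(k := x)) = PiM {..<Suc n} (\<lambda>_. Q)"
    using distr_pair_PiM_eq_PiM[of I' "\<lambda>_. Q" k] Q ins by simp
  interpret PI': prob_space "PiM I' (\<lambda>_. Q)" by (intro prob_space_PiM Q)
  have rm: "(\<lambda>\<omega>. \<lambda>j\<in>I'. \<omega> (fi j)) \<in> measurable (PiM {..<n} (\<lambda>_. Q)) (PiM I' (\<lambda>_. Q))"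
    using fiI by (intro measurable_restrict measurable_component_singleton) auto
  have h3: "Q \<Otimes>\<^sub>M PiM I' (\<lambda>_. Q) = distr (Q \<Otimes>\<^sub>M PiM {..<n} (\<lambda>_. Q)) (Q \<Otimes>\<^sub>M PiM I' (\<lambda>_. Q))
              (\<lambda>(x, y). (x, (\<lambda>j\<in>I'. y (fi j))))"
  proof -
    have "Q \<Otimes>\<^sub>M PiM I' (\<lambda>_. Q) = distr Q Q (\<lambda>x. x) \<Otimes>\<^sub>M distr (PiM {..<n} (\<lambda>_. Q)) (PiM I' (\<lambda>_. Q)) (\<lambda>\<omega>. \<lambda>j\<in>I'. \<omega> (fi j))"
      using h1 by simp
    also have "\<dots> = distr (Q \<Otimes>\<^sub>M PiM {..<n} (\<lambda>_. Q)) (Q \<Otimes>\<^sub>M PiM I' (\<lambda>_. Q))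
              (\<lambda>(x, y). (x, (\<lambda>j\<in>I'. y (fi j))))"
      by (rule pair_measure_distr[OF measurable_ident_sets[OF refl] rm]) (simp add: h1 PI'.sigma_finite_measure_axioms)
    finally show ?thesis .
  qed
  have upd[measurable]: "(\<lambda>(x, X). X(k := x)) \<in> measurable (Q \<Otimes>\<^sub>M PiM I' (\<lambda>_. Q)) (PiM {..<Suc n} (\<lambda>_. Q))"
    unfolding case_prod_beta' by (rule measurable_fun_upd[where J=I']) (use ins in auto)
  have "PiM {..<Suc n} (\<lambda>_. Q) = distr (distr (Q \<Otimes>\<^sub>M PiM {..<n} (\<lambda>_. Q)) (Q \<Otimes>\<^sub>M PiM I' (\<lambda>_. Q))
              (\<lambda>(x, y). (x, (\<lambda>j\<in>I'. y (fi j))))) (PiM {..<Suc n} (\<lambda>_. Q)) (\<lambda>(x, X). X(k := x))"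
    using h2 h3 by simp
  also have "\<dots> = distr (Q \<Otimes>\<^sub>M PiM {..<n} (\<lambda>_. Q)) (PiM {..<Suc n} (\<lambda>_. Q))
       ((\<lambda>(x, X). X(k := x)) \<circ> (\<lambda>(x, y). (x, (\<lambda>j\<in>I'. y (fi j)))))"
    by (rule distr_distr[OF upd]) (unfold case_prod_beta', intro measurable_Pair measurable_fst'' measurable_compose[OF measurable_snd rm] measurable_ident_sets refl)
  also have "\<dots> = distr (Q \<Otimes>\<^sub>M PiM {..<n} (\<lambda>_. Q)) (PiM {..<Suc n} (\<lambda>_. Q)) (\<lambda>(y,xs). insat (Suc n) k y xs)"
    using k by (intro distr_cong) (auto simp: insat_def I'_def fi_def restrict_def fun_eq_iff)
  finally show ?thesis ..
qed

lemma insat_meas: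
  assumes "k < Suc n"
  shows "(\<lambda>(y,xs). insat (Suc n) k y xs) \<in> measurable (Q \<Otimes>\<^sub>M PiM {..<n} (\<lambda>_. Q)) (PiM {..<Suc n} (\<lambda>_. Q))"
proof -
  have "(\<lambda>z. if j = k then fst z else snd z (if j < k then j else j - 1)) \<in> measurable (Q \<Otimes>\<^sub>M PiM {..<n} (\<lambda>_. Q)) Q"
    if j: "j < Suc n" for j
  proof (cases "j = k")
    case True then show ?thesis by simp
  next
    case False then have "(if j < k then j else j - 1) \<in> {..<n}" using j assms by auto
    then show ?thesis using False
      by simp
  qed
  then show ?thesis unfolding insat_def case_prod_beta' by (intro measurable_restrict) auto
qed

lemma insat_at: "k < K \<Longrightarrow> insat K k y xs k = y" by (simp add: insat_def)

lemma insat_sum: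
  assumes k: "k < Suc n"
  shows "(\<Sum>i<Suc n. F (insat (Suc n) k u us i) (insat (Suc n) k y xs i)) = F u y + (\<Sum>i<n. F (us i) (xs i))"
proof -
  define g where "g = (\<lambda>i::nat. if i < k then i else Suc i)"
  have bij: "bij_betw g {..<n} ({..<Suc n} - {k})"
    unfolding bij_betw_def
  proof
    show "inj_on g {..<n}" unfolding inj_on_def g_def by auto
    show "g ` {..<n} = {..<Suc n} - {k}"
    proof
      show "g ` {..<n} \<subseteq> {..<Suc n} - {k}" using k by (auto simp: g_def)
      show "{..<Suc n} - {k} \<subseteq> g ` {..<n}"
      proof
        fix j assume j: "j \<in> {..<Suc n} - {k}"
        show "j \<in> g ` {..<n}"
        proof (cases "j < k")
          case True then show ?thesis using j k by (auto simp: g_def image_iff intro!: bexI[of _ j])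
        next
          case False then have "j = g (j - 1)" "j - 1 < n" using j by (auto simp: g_def)
          then show ?thesis by blast
        qed
      qed
    qed
  qed
  have "(\<Sum>i<Suc n. F (insat (Suc n) k u us i) (insat (Suc n) k y xs i))
      = F u y + (\<Sum>i\<in>{..<Suc n} - {k}. F (insat (Suc n) k u us i) (insat (Suc n) k y xs i))"
    using k by (subst sum.remove[of _ k]) (auto simp: insat_at)
  also have "(\<Sum>i\<in>{..<Suc n} - {k}. F (insat (Suc n) k u us i) (insat (Suc n) k y xs i))
      = (\<Sum>i<n. F (insat (Suc n) k u us (g i)) (insat (Suc n) k y xs (g i)))"
    by (rule sum.reindex_bij_betw[symmetric, OF bij])
  also have "\<dots> = (\<Sum>i<n. F (us i) (xs i))"
    by (rule sum.cong) (auto simp: insat_def g_def)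
  finally show ?thesis .
qed


lemma CME:
  assumes Q: "prob_space Q" and N: "prob_space N" and k: "k < Suc n"
  shows "distr (Q \<Otimes>\<^sub>M (N \<Otimes>\<^sub>M (PiM {..<n} (\<lambda>_. Q) \<Otimes>\<^sub>M PiM {..<n} (\<lambda>_. N))))
     (PiM {..<Suc n} (\<lambda>_. Q) \<Otimes>\<^sub>M PiM {..<Suc n} (\<lambda>_. N))
     (\<lambda>(y,u,xs,us). (insat (Suc n) k y xs, insat (Suc n) k u us))
   = PiM {..<Suc n} (\<lambda>_. Q) \<Otimes>\<^sub>M PiM {..<Suc n} (\<lambda>_. N)"
proof -
  have pQ: "prob_space (PiM {..<n} (\<lambda>_. Q))" "prob_space (PiM {..<Suc n} (\<lambda>_. Q))" using Q by (auto intro!: prob_space_PiM)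
  have pN: "prob_space (PiM {..<n} (\<lambda>_. N))" "prob_space (PiM {..<Suc n} (\<lambda>_. N))" using N by (auto intro!: prob_space_PiM)
  interpret PN': prob_space "PiM {..<Suc n} (\<lambda>_. N)" by (rule pN(2))
  have R: "distr (Q \<Otimes>\<^sub>M (N \<Otimes>\<^sub>M (PiM {..<n} (\<lambda>_. Q) \<Otimes>\<^sub>M PiM {..<n} (\<lambda>_. N))))
     ((Q \<Otimes>\<^sub>M PiM {..<n} (\<lambda>_. Q)) \<Otimes>\<^sub>M (N \<Otimes>\<^sub>M PiM {..<n} (\<lambda>_. N))) (\<lambda>(a,b,c,d). ((a,c),(b,d)))
     = (Q \<Otimes>\<^sub>M PiM {..<n} (\<lambda>_. Q)) \<Otimes>\<^sub>M (N \<Otimes>\<^sub>M PiM {..<n} (\<lambda>_. N))"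
    by (rule rearr[OF Q N pQ(1) pN(1)])
  have D: "PiM {..<Suc n} (\<lambda>_. Q) \<Otimes>\<^sub>M PiM {..<Suc n} (\<lambda>_. N) =
     distr ((Q \<Otimes>\<^sub>M PiM {..<n} (\<lambda>_. Q)) \<Otimes>\<^sub>M (N \<Otimes>\<^sub>M PiM {..<n} (\<lambda>_. N)))
       (PiM {..<Suc n} (\<lambda>_. Q) \<Otimes>\<^sub>M PiM {..<Suc n} (\<lambda>_. N))
       (\<lambda>(a, b). ((\<lambda>(y,xs). insat (Suc n) k y xs) a, (\<lambda>(y,xs). insat (Suc n) k y xs) b))"
    using pair_measure_distr[OF insat_meas[OF k, where Q=Q] insat_meas[OF k, where Q=N]] insat_L1[OF Q k] insat_L1[OF N k]
      PN'.sigma_finite_measure_axioms by simp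
  have m1: "(\<lambda>(a,b,c,d). ((a,c),(b,d))) \<in> measurable (Q \<Otimes>\<^sub>M (N \<Otimes>\<^sub>M (PiM {..<n} (\<lambda>_. Q) \<Otimes>\<^sub>M PiM {..<n} (\<lambda>_. N))))
     ((Q \<Otimes>\<^sub>M PiM {..<n} (\<lambda>_. Q)) \<Otimes>\<^sub>M (N \<Otimes>\<^sub>M PiM {..<n} (\<lambda>_. N)))"
    by measurable
  have m2: "(\<lambda>(a, b). ((\<lambda>(y,xs). insat (Suc n) k y xs) a, (\<lambda>(y,xs). insat (Suc n) k y xs) b)) \<in>
     measurable ((Q \<Otimes>\<^sub>M PiM {..<n} (\<lambda>_. Q)) \<Otimes>\<^sub>M (N \<Otimes>\<^sub>M PiM {..<n} (\<lambda>_. N)))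
       (PiM {..<Suc n} (\<lambda>_. Q) \<Otimes>\<^sub>M PiM {..<Suc n} (\<lambda>_. N))"
    unfolding case_prod_beta'
    by (intro measurable_Pair measurable_compose[OF measurable_fst insat_meas[OF k, unfolded case_prod_beta']]
        measurable_compose[OF measurable_snd insat_meas[OF k, unfolded case_prod_beta']])
  have "PiM {..<Suc n} (\<lambda>_. Q) \<Otimes>\<^sub>M PiM {..<Suc n} (\<lambda>_. N) =
     distr (distr (Q \<Otimes>\<^sub>M (N \<Otimes>\<^sub>M (PiM {..<n} (\<lambda>_. Q) \<Otimes>\<^sub>M PiM {..<n} (\<lambda>_. N))))
     ((Q \<Otimes>\<^sub>M PiM {..<n} (\<lambda>_. Q)) \<Otimes>\<^sub>M (N \<Otimes>\<^sub>M PiM {..<n} (\<lambda>_. N))) (\<lambda>(a,b,c,d). ((a,c),(b,d))))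
       (PiM {..<Suc n} (\<lambda>_. Q) \<Otimes>\<^sub>M PiM {..<Suc n} (\<lambda>_. N))
       (\<lambda>(a, b). ((\<lambda>(y,xs). insat (Suc n) k y xs) a, (\<lambda>(y,xs). insat (Suc n) k y xs) b))"
    using D R by simp
  also have "\<dots> = distr (Q \<Otimes>\<^sub>M (N \<Otimes>\<^sub>M (PiM {..<n} (\<lambda>_. Q) \<Otimes>\<^sub>M PiM {..<n} (\<lambda>_. N))))
     (PiM {..<Suc n} (\<lambda>_. Q) \<Otimes>\<^sub>M PiM {..<Suc n} (\<lambda>_. N))
     ((\<lambda>(a, b). ((\<lambda>(y,xs). insat (Suc n) k y xs) a, (\<lambda>(y,xs). insat (Suc n) k y xs) b)) \<circ> (\<lambda>(a,b,c,d). ((a,c),(b,d))))"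
    by (rule distr_distr[OF m2 m1])
  also have "\<dots> = distr (Q \<Otimes>\<^sub>M (N \<Otimes>\<^sub>M (PiM {..<n} (\<lambda>_. Q) \<Otimes>\<^sub>M PiM {..<n} (\<lambda>_. N))))
     (PiM {..<Suc n} (\<lambda>_. Q) \<Otimes>\<^sub>M PiM {..<Suc n} (\<lambda>_. N))
     (\<lambda>(y,u,xs,us). (insat (Suc n) k y xs, insat (Suc n) k u us))"
    by (rule distr_cong) auto
  finally show ?thesis ..
qed



lemma indep_set_law:
  assumes P: "prob_space P" and Xm: "XV \<in> measurable P S" and Um: "UV \<in> measurable P T"
  and ind: "prob_space.indep_set P (sigma_sets (space P) {XV -` A \<inter> space P | A. A \<in> sets S})
               (sigma_sets (space P) {UV -` B \<inter> space P | B. B \<in> sets T})"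
  shows "distr P (S \<Otimes>\<^sub>M T) (\<lambda>\<omega>. (XV \<omega>, UV \<omega>)) = distr P S XV \<Otimes>\<^sub>M distr P T UV"
proof (rule pair_measure_eqI[symmetric])
  interpret P: prob_space P by fact
  interpret DX: prob_space "distr P S XV" by (rule P.prob_space_distr[OF Xm])
  interpret DU: prob_space "distr P T UV" by (rule P.prob_space_distr[OF Um])
  show "sigma_finite_measure (distr P S XV)" "sigma_finite_measure (distr P T UV)" by unfold_locales
  show "sets (distr P S XV \<Otimes>\<^sub>M distr P T UV) = sets (distr P (S \<Otimes>\<^sub>M T) (\<lambda>\<omega>. (XV \<omega>, UV \<omega>)))"
    unfolding sets_distr by (rule sets_pair_measure_cong) simp_all
  fix A B assume A: "A \<in> sets (distr P S XV)" and B: "B \<in> sets (distr P T UV)"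
  then have A': "A \<in> sets S" and B': "B \<in> sets T" by auto
  have a: "XV -` A \<inter> space P \<in> sigma_sets (space P) {XV -` A \<inter> space P | A. A \<in> sets S}"
    using A' by (intro sigma_sets.Basic) blast
  have b: "UV -` B \<inter> space P \<in> sigma_sets (space P) {UV -` B \<inter> space P | B. B \<in> sets T}"
    using B' by (intro sigma_sets.Basic) blast
  have ev: "XV -` A \<inter> space P \<in> P.events" "UV -` B \<inter> space P \<in> P.events"
    using A' B' Xm Um by (auto intro: measurable_sets)
  have eq: "(\<lambda>\<omega>. (XV \<omega>, UV \<omega>)) -` (A \<times> B) \<inter> space P = (XV -` A \<inter> space P) \<inter> (UV -` B \<inter> space P)"
    by blast
  have "emeasure (distr P (S \<Otimes>\<^sub>M T) (\<lambda>\<omega>. (XV \<omega>, UV \<omega>))) (A \<times> B)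
      = emeasure P ((XV -` A \<inter> space P) \<inter> (UV -` B \<inter> space P))"
    using emeasure_distr[OF measurable_Pair[OF Xm Um] pair_measureI[OF A' B']] by (simp only: eq)
  also have "\<dots> = ennreal (P.prob (XV -` A \<inter> space P) * P.prob (UV -` B \<inter> space P))"
    using P.indep_setD[OF ind a b] ev by (simp add: P.emeasure_eq_measure)
  also have "\<dots> = emeasure (distr P S XV) A * emeasure (distr P T UV) B"
    by (simp only: emeasure_distr[OF Xm A'] emeasure_distr[OF Um B'] P.emeasure_eq_measure ennreal_mult measure_nonneg)
  finally show "emeasure (distr P S XV) A * emeasure (distr P T UV) B
      = emeasure (distr P (S \<Otimes>\<^sub>M T) (\<lambda>\<omega>. (XV \<omega>, UV \<omega>))) (A \<times> B)" by simp
qed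



lemma CME_meas:
  assumes k: "k < Suc n"
  shows "(\<lambda>(y,u,xs,us). (insat (Suc n) k y xs, insat (Suc n) k u us)) \<in>
    measurable (Q \<Otimes>\<^sub>M (N \<Otimes>\<^sub>M (PiM {..<n} (\<lambda>_. Q) \<Otimes>\<^sub>M PiM {..<n} (\<lambda>_. N))))
      (PiM {..<Suc n} (\<lambda>_. Q) \<Otimes>\<^sub>M PiM {..<Suc n} (\<lambda>_. N))"
proof -
  have a: "(\<lambda>t. (fst t, fst (snd (snd t)))) \<in> measurable (Q \<Otimes>\<^sub>M (N \<Otimes>\<^sub>M (PiM {..<n} (\<lambda>_. Q) \<Otimes>\<^sub>M PiM {..<n} (\<lambda>_. N))))
      (Q \<Otimes>\<^sub>M PiM {..<n} (\<lambda>_. Q))" by measurable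
  have b: "(\<lambda>t. (fst (snd t), snd (snd (snd t)))) \<in> measurable (Q \<Otimes>\<^sub>M (N \<Otimes>\<^sub>M (PiM {..<n} (\<lambda>_. Q) \<Otimes>\<^sub>M PiM {..<n} (\<lambda>_. N))))
      (N \<Otimes>\<^sub>M PiM {..<n} (\<lambda>_. N))" by measurable
  have "(\<lambda>t. (insat (Suc n) k (fst t) (fst (snd (snd t))), insat (Suc n) k (fst (snd t)) (snd (snd (snd t))))) \<in>
    measurable (Q \<Otimes>\<^sub>M (N \<Otimes>\<^sub>M (PiM {..<n} (\<lambda>_. Q) \<Otimes>\<^sub>M PiM {..<n} (\<lambda>_. N))))
      (PiM {..<Suc n} (\<lambda>_. Q) \<Otimes>\<^sub>M PiM {..<Suc n} (\<lambda>_. N))"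
    using measurable_Pair[OF measurable_compose[OF a insat_meas[OF k]] measurable_compose[OF b insat_meas[OF k]]]
    by simp
  then show ?thesis by (simp add: case_prod_beta')
qed




lemma wc_helper:
  assumes "(\<lambda>z. w (fst z) (snd z)) \<in> borel_measurable (N \<Otimes>\<^sub>M Q)"
    and "a \<in> measurable T N" and "b \<in> measurable T Q"
  shows "(\<lambda>t. w (a t) (b t)) \<in> borel_measurable T"
  using measurable_compose[OF measurable_Pair[OF assms(2,3)] assms(1)] by simp

lemma ind_comp:
  assumes "f \<in> measurable T Q" "A \<in> sets Q"
  shows "(\<lambda>x. indicator A (f x) :: real) \<in> borel_measurable T"
  using measurable_compose[OF assms(1) borel_measurable_indicator[OF assms(2)]] by simp

lemma comp_single:
  assumes "a \<in> measurable T (PiM I (\<lambda>_. Q))" "i \<in> I"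
  shows "(\<lambda>t. a t i) \<in> measurable T Q"
  using measurable_compose[OF assms(1) measurable_component_singleton[OF assms(2)]] by simp



theorem lemma1:
  fixes M :: "'a measure" and N :: "'u measure" and P :: "'w measure"
    and r :: "'a \<Rightarrow> real" and e :: "'u \<Rightarrow> 'a \<Rightarrow> real" and p :: "'a \<Rightarrow> real"
    and K :: nat
    and X :: "nat \<Rightarrow> 'w \<Rightarrow> 'a" and U :: "nat \<Rightarrow> 'w \<Rightarrow> 'u" and I :: "'w \<Rightarrow> nat"
  assumes sf: "sigma_finite_measure M"
    and r_meas: "r \<in> borel_measurable M"
    and noise_law: "prob_space N"
    and noise_field: "(\<lambda>(u, x). e u x) \<in> borel_measurable (N \<Otimes>\<^sub>M M)"
    and K2: "2 \<le> K"
    and p_dens: "p \<in> prob_densities M"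
    and P: "prob_space P"
    and X_rv: "\<And>k. k < K \<Longrightarrow> X k \<in> measurable P M"
    and X_distr: "\<And>k. k < K \<Longrightarrow> distributed P M (X k) (\<lambda>x. ennreal (p x))"
    and X_indep: "prob_space.indep_vars P (\<lambda>_. M) X {..<K}"
    and U_rv: "\<And>k. k < K \<Longrightarrow> U k \<in> measurable P N"
    and U_distr: "\<And>k. k < K \<Longrightarrow> distr P N (U k) = N"
    and U_indep: "prob_space.indep_vars P (\<lambda>_. N) U {..<K}"
    and XU_indep: "prob_space.indep_set P
         (sigma_sets (space P) {(\<lambda>\<omega>. restrict (\<lambda>k. X k \<omega>) {..<K}) -` A \<inter> space P
                                  | A. A \<in> sets (PiM {..<K} (\<lambda>_. M))})
         (sigma_sets (space P) {(\<lambda>\<omega>. restrict (\<lambda>k. U k \<omega>) {..<K}) -` B \<inter> space P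
                                  | B. B \<in> sets (PiM {..<K} (\<lambda>_. N))})"
    and I_rv: "I \<in> measurable P (count_space UNIV)"
    and I_range: "\<And>\<omega>. \<omega> \<in> space P \<Longrightarrow> I \<omega> < K"
    and I_cond: "\<And>k A. k < K \<Longrightarrow> A \<in> sets (PiM {..<K} (\<lambda>_. M) \<Otimes>\<^sub>M PiM {..<K} (\<lambda>_. N)) \<Longrightarrow>
         measure P {\<omega> \<in> space P. I \<omega> = k \<and>
             (restrict (\<lambda>j. X j \<omega>) {..<K}, restrict (\<lambda>j. U j \<omega>) {..<K}) \<in> A}
         = (\<integral>\<omega>. indicator A (restrict (\<lambda>j. X j \<omega>) {..<K}, restrict (\<lambda>j. U j \<omega>) {..<K})
               * (pl_weight r e (U k \<omega>) (X k \<omega>)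
                  / (\<Sum>i<K. pl_weight r e (U i \<omega>) (X i \<omega>))) \<partial>P)"
  shows "(\<forall>f. f \<in> borel_measurable M \<longrightarrow> integrable (density M (\<lambda>x. ennreal (p x))) f \<longrightarrow>
            integrable P (\<lambda>\<omega>. f (X (I \<omega>) \<omega>)) \<and>
            (\<integral>\<omega>. f (X (I \<omega>) \<omega>) \<partial>P)
              = (\<integral>x. f x * choice_kernel K M N r e p x \<partial>(density M (\<lambda>x. ennreal (p x)))))
         \<and> distributed P M (\<lambda>\<omega>. X (I \<omega>) \<omega>)
              (\<lambda>x. ennreal (p x * choice_kernel K M N r e p x))"
  
proof -
  interpret P: prob_space P by (rule P)
  interpret N: prob_space N by (rule noise_law)
  define Q where "Q = density M (\<lambda>x. ennreal (p x))"
  define n where "n = K - 1"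
  have Kn: "K = Suc n" using K2 by (simp add: n_def)
  have K0: "0 < K" using K2 by simp
  have p_meas[measurable]: "p \<in> borel_measurable M" and p_nn: "\<And>x. x \<in> space M \<Longrightarrow> 0 \<le> p x"
    using p_dens by (auto simp: prob_densities_def)
  have XQ: "distr P M (X k) = Q" if "k < K" for k
    using X_distr[OF that] by (simp add: distributed_def Q_def)
  interpret Q: prob_space Q using P.prob_space_distr[OF X_rv[OF K0]] XQ[OF K0] by simp
  have sQ: "sets Q = sets M" "space Q = space M" by (simp_all add: Q_def)
  define w where "w = pl_weight r e"
  have w_pos: "0 < w u x" for u x by (simp add: w_def pl_weight_def)
  have WM: "(\<lambda>z. w (fst z) (snd z)) \<in> borel_measurable (N \<Otimes>\<^sub>M M)"
  proof -
    have e2[measurable]: "(\<lambda>z. e (fst z) (snd z)) \<in> borel_measurable (N \<Otimes>\<^sub>M M)"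
      using noise_field by (simp add: case_prod_beta')
    have r2[measurable]: "(\<lambda>z. r (snd z)) \<in> borel_measurable (N \<Otimes>\<^sub>M M)"
      by (rule measurable_compose[OF measurable_snd r_meas])
    show ?thesis unfolding w_def pl_weight_def by measurable
  qed
  have WQ: "(\<lambda>z. w (fst z) (snd z)) \<in> borel_measurable (N \<Otimes>\<^sub>M Q)"
    using WM by (subst measurable_cong_sets[OF sets_pair_measure_cong[OF refl sQ(1)] refl])

  have XVm: "(\<lambda>\<omega>. restrict (\<lambda>j. X j \<omega>) {..<K}) \<in> measurable P (PiM {..<K} (\<lambda>_. M))"
    by (rule measurable_restrict) (rule X_rv, simp)
  have UVm: "(\<lambda>\<omega>. restrict (\<lambda>j. U j \<omega>) {..<K}) \<in> measurable P (PiM {..<K} (\<lambda>_. N))"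
    by (rule measurable_restrict) (rule U_rv, simp)
  have sSL: "sets (PiM {..<K} (\<lambda>_. M) \<Otimes>\<^sub>M PiM {..<K} (\<lambda>_. N)) = sets (PiM {..<K} (\<lambda>_. Q) \<Otimes>\<^sub>M PiM {..<K} (\<lambda>_. N))"
    by (intro sets_pair_measure_cong sets_PiM_cong refl) (simp add: sQ)
  have Zm: "(\<lambda>\<omega>. (restrict (\<lambda>j. X j \<omega>) {..<K}, restrict (\<lambda>j. U j \<omega>) {..<K}))
      \<in> measurable P (PiM {..<K} (\<lambda>_. M) \<Otimes>\<^sub>M PiM {..<K} (\<lambda>_. N))"
    by (rule measurable_Pair[OF XVm UVm])
  have ZmL: "(\<lambda>\<omega>. (restrict (\<lambda>j. X j \<omega>) {..<K}, restrict (\<lambda>j. U j \<omega>) {..<K}))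
      \<in> measurable P (PiM {..<K} (\<lambda>_. Q) \<Otimes>\<^sub>M PiM {..<K} (\<lambda>_. N))"
    using Zm by (subst measurable_cong_sets[OF refl sSL[symmetric]])
  have hX: "distr P (PiM {..<K} (\<lambda>_. M)) (\<lambda>\<omega>. restrict (\<lambda>j. X j \<omega>) {..<K}) = PiM {..<K} (\<lambda>_. Q)"
  proof -
    have "distr P (PiM {..<K} (\<lambda>_. M)) (\<lambda>\<omega>. restrict (\<lambda>j. X j \<omega>) {..<K}) = PiM {..<K} (\<lambda>i. distr P M (X i))"
      using P.indep_vars_iff_distr_eq_PiM'[where I="{..<K}" and M'="\<lambda>_. M" and X=X] X_indep X_rv K0 by auto
    also have "\<dots> = PiM {..<K} (\<lambda>_. Q)" by (rule PiM_cong) (auto simp: XQ)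
    finally show ?thesis .
  qed
  have hU: "distr P (PiM {..<K} (\<lambda>_. N)) (\<lambda>\<omega>. restrict (\<lambda>j. U j \<omega>) {..<K}) = PiM {..<K} (\<lambda>_. N)"
  proof -
    have "distr P (PiM {..<K} (\<lambda>_. N)) (\<lambda>\<omega>. restrict (\<lambda>j. U j \<omega>) {..<K}) = PiM {..<K} (\<lambda>i. distr P N (U i))"
      using P.indep_vars_iff_distr_eq_PiM'[where I="{..<K}" and M'="\<lambda>_. N" and X=U] U_indep U_rv K0 by auto
    also have "\<dots> = PiM {..<K} (\<lambda>_. N)" by (rule PiM_cong) (auto simp: U_distr)
    finally show ?thesis .
  qed
  have law: "distr P (PiM {..<K} (\<lambda>_. Q) \<Otimes>\<^sub>M PiM {..<K} (\<lambda>_. N))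
      (\<lambda>\<omega>. (restrict (\<lambda>j. X j \<omega>) {..<K}, restrict (\<lambda>j. U j \<omega>) {..<K}))
      = PiM {..<K} (\<lambda>_. Q) \<Otimes>\<^sub>M PiM {..<K} (\<lambda>_. N)"
  proof -
    have "distr P (PiM {..<K} (\<lambda>_. Q) \<Otimes>\<^sub>M PiM {..<K} (\<lambda>_. N))
      (\<lambda>\<omega>. (restrict (\<lambda>j. X j \<omega>) {..<K}, restrict (\<lambda>j. U j \<omega>) {..<K}))
      = distr P (PiM {..<K} (\<lambda>_. M) \<Otimes>\<^sub>M PiM {..<K} (\<lambda>_. N))
      (\<lambda>\<omega>. (restrict (\<lambda>j. X j \<omega>) {..<K}, restrict (\<lambda>j. U j \<omega>) {..<K}))"
      by (rule distr_cong[OF refl sSL[symmetric]]) simp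
    also have "\<dots> = PiM {..<K} (\<lambda>_. Q) \<Otimes>\<^sub>M PiM {..<K} (\<lambda>_. N)"
      using indep_set_law[OF P XVm UVm XU_indep] hX hU by simp
    finally show ?thesis .
  qed

  define Lam where "Lam = N \<Otimes>\<^sub>M (PiM {..<n} (\<lambda>_. Q) \<Otimes>\<^sub>M PiM {..<n} (\<lambda>_. N))"
  interpret Lam: prob_space Lam unfolding Lam_def
    by (intro prob_space_pair prob_space_PiM noise_law Q.prob_space_axioms)
  interpret QL: pair_prob_space Q Lam ..
  interpret QLp: prob_space "Q \<Otimes>\<^sub>M Lam" by (intro prob_space_pair Q.prob_space_axioms Lam.prob_space_axioms)
  define G where "G t = w (fst (snd t)) (fst t) / (w (fst (snd t)) (fst t) + (\<Sum>i<n. w (snd (snd (snd t)) i) (fst (snd (snd t)) i)))"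
    for t :: "'a \<times> 'u \<times> (nat \<Rightarrow> 'a) \<times> (nat \<Rightarrow> 'u)"
  have c1: "(\<lambda>t. fst (snd t)) \<in> measurable (Q \<Otimes>\<^sub>M Lam) N"
    unfolding Lam_def by (rule measurable_compose[OF measurable_snd measurable_fst])
  have c2: "(\<lambda>t. fst t) \<in> measurable (Q \<Otimes>\<^sub>M Lam) Q" by (rule measurable_fst)
  have c3: "(\<lambda>t. fst (snd (snd t))) \<in> measurable (Q \<Otimes>\<^sub>M Lam) (PiM {..<n} (\<lambda>_. Q))"
    unfolding Lam_def by (rule measurable_compose[OF measurable_compose[OF measurable_snd measurable_snd] measurable_fst])
  have c4: "(\<lambda>t. snd (snd (snd t))) \<in> measurable (Q \<Otimes>\<^sub>M Lam) (PiM {..<n} (\<lambda>_. N))"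
    unfolding Lam_def by (rule measurable_compose[OF measurable_compose[OF measurable_snd measurable_snd] measurable_snd])
  have Gm: "G \<in> borel_measurable (Q \<Otimes>\<^sub>M Lam)"
    unfolding G_def
    by (intro borel_measurable_divide borel_measurable_add borel_measurable_sum wc_helper[OF WQ] c1 c2
        comp_single[OF c3] comp_single[OF c4]) auto
  have G01: "0 \<le> G t" "G t \<le> 1" for t
  proof -
    have "0 \<le> (\<Sum>i<n. w (snd (snd (snd t)) i) (fst (snd (snd t)) i))"
      by (intro sum_nonneg) (simp add: less_imp_le w_pos)
    then show "0 \<le> G t" "G t \<le> 1" unfolding G_def using w_pos[of "fst (snd t)" "fst t"]
      by (auto simp: divide_le_eq_1)
  qed
  define H where "H = choice_kernel K M N r e p"
  have H_eq: "H x = real K * (\<integral>t. G (x, t) \<partial>Lam)" for x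
  proof -
    have "H x = (\<integral>t. real K * G (x, t) \<partial>Lam)"
      unfolding H_def choice_kernel_def Lam_def G_def n_def Q_def w_def
      by (rule Bochner_Integration.integral_cong[OF refl]) (auto split: prod.splits)
    then show ?thesis by simp
  qed
  have Hm: "H \<in> borel_measurable Q"
  proof -
    have "(\<lambda>x. \<integral>t. real K * G (x, t) \<partial>Lam) \<in> borel_measurable Q"
      by (rule Lam.borel_measurable_lebesgue_integral) (simp add: case_prod_beta' borel_measurable_times[OF borel_measurable_const Gm])
    moreover have "(\<lambda>x. \<integral>t. real K * G (x, t) \<partial>Lam) = H" using H_eq by (simp add: fun_eq_iff)
    ultimately show ?thesis by simp
  qed
  have HmM[measurable]: "H \<in> borel_measurable M" using Hm by (subst measurable_cong_sets[OF sQ(1)[symmetric] refl])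
  have Gint: "integrable Lam (\<lambda>t. G (x, t))" if "x \<in> space Q" for x
    using that by (intro Lam.integrable_const_bound[where B=1]) (auto simp: G01 measurable_Pair2[OF Gm])
  have H0K: "0 \<le> H x" "H x \<le> real K" if "x \<in> space Q" for x
  proof -
    have "0 \<le> (\<integral>t. G (x, t) \<partial>Lam)" by (intro integral_nonneg_AE) (simp add: G01)
    moreover have "(\<integral>t. G (x, t) \<partial>Lam) \<le> (\<integral>t. 1 \<partial>Lam)"
      by (intro integral_mono Gint that) (auto simp: G01)
    ultimately show "0 \<le> H x" "H x \<le> real K" using H_eq[of x] by (auto simp: Lam.prob_space intro: mult_left_le)
  qed

  have core: "measure P {\<omega> \<in> space P. I \<omega> = k \<and>
      (restrict (\<lambda>j. X j \<omega>) {..<K}, restrict (\<lambda>j. U j \<omega>) {..<K})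
        \<in> {z \<in> space (PiM {..<K} (\<lambda>_. M) \<Otimes>\<^sub>M PiM {..<K} (\<lambda>_. N)). fst z k \<in> A}}
      = (\<integral>x. indicator A x * H x \<partial>Q) / real K"
    if k: "k < K" and A: "A \<in> sets M" for k A
  proof -
    have kn: "k < Suc n" using k Kn by simp
    have AQ: "A \<in> sets Q" using A sQ by simp
    have fk: "(\<lambda>z. fst z k) \<in> measurable (PiM {..<K} (\<lambda>_. M) \<Otimes>\<^sub>M PiM {..<K} (\<lambda>_. N)) M"
      using comp_single[OF measurable_fst, where I="{..<K}" and Q=M and i=k] k by simp
    have Ak: "{z \<in> space (PiM {..<K} (\<lambda>_. M) \<Otimes>\<^sub>M PiM {..<K} (\<lambda>_. N)). fst z k \<in> A}
        \<in> sets (PiM {..<K} (\<lambda>_. M) \<Otimes>\<^sub>M PiM {..<K} (\<lambda>_. N))"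
      using measurable_sets[OF fk A] by (simp add: vimage_def Int_def conj_commute)
    define gk where "gk z = indicator A (fst z k) * (w (snd z k) (fst z k) / (\<Sum>i<K. w (snd z i) (fst z i)))"
      for z :: "(nat \<Rightarrow> 'a) \<times> (nat \<Rightarrow> 'u)"
    have d1: "(\<lambda>z. fst z i) \<in> measurable (PiM {..<K} (\<lambda>_. Q) \<Otimes>\<^sub>M PiM {..<K} (\<lambda>_. N)) Q" if "i < K" for i
      using comp_single[OF measurable_fst, where I="{..<K}" and Q=Q and i=i] that by simp
    have d2: "(\<lambda>z. snd z i) \<in> measurable (PiM {..<K} (\<lambda>_. Q) \<Otimes>\<^sub>M PiM {..<K} (\<lambda>_. N)) N" if "i < K" for i
      using comp_single[OF measurable_snd, where I="{..<K}" and Q=N and i=i] that by simp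
    have gkm: "gk \<in> borel_measurable (PiM {..<K} (\<lambda>_. Q) \<Otimes>\<^sub>M PiM {..<K} (\<lambda>_. N))"
      unfolding gk_def
      by (intro borel_measurable_times ind_comp[OF _ AQ] borel_measurable_divide
          borel_measurable_sum wc_helper[OF WQ] d1 d2 k) auto
    define \<Phi> where "\<Phi> = (\<lambda>(y::'a,u::'u,xs::nat \<Rightarrow> 'a,us::nat \<Rightarrow> 'u). (insat K k y xs, insat K k u us))"
    have \<Phi>m: "\<Phi> \<in> measurable (Q \<Otimes>\<^sub>M Lam) (PiM {..<K} (\<lambda>_. Q) \<Otimes>\<^sub>M PiM {..<K} (\<lambda>_. N))"
      using CME_meas[OF kn, where Q=Q and N=N] unfolding \<Phi>_def Lam_def Kn .
    have CME': "distr (Q \<Otimes>\<^sub>M Lam) (PiM {..<K} (\<lambda>_. Q) \<Otimes>\<^sub>M PiM {..<K} (\<lambda>_. N)) \<Phi>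
        = PiM {..<K} (\<lambda>_. Q) \<Otimes>\<^sub>M PiM {..<K} (\<lambda>_. N)"
      using CME[OF Q.prob_space_axioms noise_law kn] unfolding \<Phi>_def Lam_def Kn .
    have Gi: "integrable (Q \<Otimes>\<^sub>M Lam) (\<lambda>t. indicator A (fst t) * G t)"
      by (intro QL.P.integrable_const_bound[where B=1] borel_measurable_times
           ind_comp[OF measurable_fst AQ] Gm) (auto simp: G01 indicator_def)
    have "measure P {\<omega> \<in> space P. I \<omega> = k \<and>
      (restrict (\<lambda>j. X j \<omega>) {..<K}, restrict (\<lambda>j. U j \<omega>) {..<K})
        \<in> {z \<in> space (PiM {..<K} (\<lambda>_. M) \<Otimes>\<^sub>M PiM {..<K} (\<lambda>_. N)). fst z k \<in> A}}
      = (\<integral>\<omega>. indicator {z \<in> space (PiM {..<K} (\<lambda>_. M) \<Otimes>\<^sub>M PiM {..<K} (\<lambda>_. N)). fst z k \<in> A}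
            (restrict (\<lambda>j. X j \<omega>) {..<K}, restrict (\<lambda>j. U j \<omega>) {..<K})
          * (pl_weight r e (U k \<omega>) (X k \<omega>) / (\<Sum>i<K. pl_weight r e (U i \<omega>) (X i \<omega>))) \<partial>P)"
      by (rule I_cond[OF k Ak])
    also have "\<dots> = (\<integral>\<omega>. gk (restrict (\<lambda>j. X j \<omega>) {..<K}, restrict (\<lambda>j. U j \<omega>) {..<K}) \<partial>P)"
    proof (rule Bochner_Integration.integral_cong[OF refl])
      fix \<omega> assume \<omega>: "\<omega> \<in> space P"
      have sp: "(restrict (\<lambda>j. X j \<omega>) {..<K}, restrict (\<lambda>j. U j \<omega>) {..<K})
          \<in> space (PiM {..<K} (\<lambda>_. M) \<Otimes>\<^sub>M PiM {..<K} (\<lambda>_. N))"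
        using measurable_space[OF Zm \<omega>] .
      have s: "(\<Sum>i<K. pl_weight r e (U i \<omega>) (X i \<omega>)) =
          (\<Sum>i<K. w (restrict (\<lambda>j. U j \<omega>) {..<K} i) (restrict (\<lambda>j. X j \<omega>) {..<K} i))"
        by (intro sum.cong) (auto simp: w_def)
      show "indicator {z \<in> space (PiM {..<K} (\<lambda>_. M) \<Otimes>\<^sub>M PiM {..<K} (\<lambda>_. N)). fst z k \<in> A}
            (restrict (\<lambda>j. X j \<omega>) {..<K}, restrict (\<lambda>j. U j \<omega>) {..<K})
          * (pl_weight r e (U k \<omega>) (X k \<omega>) / (\<Sum>i<K. pl_weight r e (U i \<omega>) (X i \<omega>)))
          = gk (restrict (\<lambda>j. X j \<omega>) {..<K}, restrict (\<lambda>j. U j \<omega>) {..<K})"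
        unfolding gk_def s using sp k by (simp add: indicator_def w_def)
    qed
    also have "\<dots> = (\<integral>z. gk z \<partial>distr P (PiM {..<K} (\<lambda>_. Q) \<Otimes>\<^sub>M PiM {..<K} (\<lambda>_. N))
          (\<lambda>\<omega>. (restrict (\<lambda>j. X j \<omega>) {..<K}, restrict (\<lambda>j. U j \<omega>) {..<K})))"
      by (rule integral_distr[symmetric, OF ZmL gkm])
    also have "\<dots> = (\<integral>z. gk z \<partial>(PiM {..<K} (\<lambda>_. Q) \<Otimes>\<^sub>M PiM {..<K} (\<lambda>_. N)))"
      by (simp only: law)
    also have "\<dots> = (\<integral>z. gk z \<partial>distr (Q \<Otimes>\<^sub>M Lam) (PiM {..<K} (\<lambda>_. Q) \<Otimes>\<^sub>M PiM {..<K} (\<lambda>_. N)) \<Phi>)"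
      by (simp only: CME')
    also have "\<dots> = (\<integral>t. gk (\<Phi> t) \<partial>(Q \<Otimes>\<^sub>M Lam))"
      by (rule integral_distr[OF \<Phi>m gkm])
    also have "\<dots> = (\<integral>t. indicator A (fst t) * G t \<partial>(Q \<Otimes>\<^sub>M Lam))"
    proof (rule Bochner_Integration.integral_cong[OF refl])
      fix t :: "'a \<times> 'u \<times> (nat \<Rightarrow> 'a) \<times> (nat \<Rightarrow> 'u)"
      obtain y u xs us where t: "t = (y, u, xs, us)" by (cases t) auto
      have s: "(\<Sum>i<K. w (insat K k u us i) (insat K k y xs i)) = w u y + (\<Sum>i<n. w (us i) (xs i))"
        using insat_sum[OF kn, of w u us y xs] unfolding Kn .
      show "gk (\<Phi> t) = indicator A (fst t) * G t"
        unfolding t \<Phi>_def gk_def G_def using s k by (simp add: insat_at)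
    qed
    also have "\<dots> = (\<integral>y. (\<integral>t. indicator A y * G (y, t) \<partial>Lam) \<partial>Q)"
      using QL.integral_fst'[OF Gi] by simp
    also have "\<dots> = (\<integral>y. indicator A y * H y / real K \<partial>Q)"
      by (rule Bochner_Integration.integral_cong[OF refl]) (use K0 in \<open>simp add: H_eq\<close>)
    also have "\<dots> = (\<integral>y. indicator A y * H y \<partial>Q) / real K"
      by simp
    finally show ?thesis .
  qed

  have tot: "measure P {\<omega> \<in> space P. X (I \<omega>) \<omega> \<in> A} = (\<integral>x. indicator A x * H x \<partial>Q)"
    if A: "A \<in> sets M" for A
  proof -
    define B where "B k = {\<omega> \<in> space P. I \<omega> = k \<and>
      (restrict (\<lambda>j. X j \<omega>) {..<K}, restrict (\<lambda>j. U j \<omega>) {..<K})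
        \<in> {z \<in> space (PiM {..<K} (\<lambda>_. M) \<Otimes>\<^sub>M PiM {..<K} (\<lambda>_. N)). fst z k \<in> A}}" for k
    have eq: "{\<omega> \<in> space P. X (I \<omega>) \<omega> \<in> A} = (\<Union>k\<in>{..<K}. B k)"
    proof
      show "{\<omega> \<in> space P. X (I \<omega>) \<omega> \<in> A} \<subseteq> (\<Union>k\<in>{..<K}. B k)"
      proof
        fix \<omega> assume \<omega>: "\<omega> \<in> {\<omega> \<in> space P. X (I \<omega>) \<omega> \<in> A}"
        then have sp: "(restrict (\<lambda>j. X j \<omega>) {..<K}, restrict (\<lambda>j. U j \<omega>) {..<K})
          \<in> space (PiM {..<K} (\<lambda>_. M) \<Otimes>\<^sub>M PiM {..<K} (\<lambda>_. N))" using measurable_space[OF Zm] by auto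
        have "I \<omega> < K" using \<omega> I_range by auto
        then have "\<omega> \<in> B (I \<omega>)" using \<omega> sp by (auto simp: B_def)
        then show "\<omega> \<in> (\<Union>k\<in>{..<K}. B k)" using \<open>I \<omega> < K\<close> by auto
      qed
      show "(\<Union>k\<in>{..<K}. B k) \<subseteq> {\<omega> \<in> space P. X (I \<omega>) \<omega> \<in> A}"
        by (auto simp: B_def)
    qed
    have Bs: "B k \<in> sets P" if "k < K" for k
    proof -
      have fk: "(\<lambda>z. fst z k) \<in> measurable (PiM {..<K} (\<lambda>_. M) \<Otimes>\<^sub>M PiM {..<K} (\<lambda>_. N)) M"
        using comp_single[OF measurable_fst, where I="{..<K}" and Q=M and i=k] that by simp
      have Ak: "{z \<in> space (PiM {..<K} (\<lambda>_. M) \<Otimes>\<^sub>M PiM {..<K} (\<lambda>_. N)). fst z k \<in> A}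
          \<in> sets (PiM {..<K} (\<lambda>_. M) \<Otimes>\<^sub>M PiM {..<K} (\<lambda>_. N))"
        using measurable_sets[OF fk A] by (simp add: vimage_def Int_def conj_commute)
      have "B k = (I -` {k} \<inter> space P) \<inter>
          ((\<lambda>\<omega>. (restrict (\<lambda>j. X j \<omega>) {..<K}, restrict (\<lambda>j. U j \<omega>) {..<K})) -`
             {z \<in> space (PiM {..<K} (\<lambda>_. M) \<Otimes>\<^sub>M PiM {..<K} (\<lambda>_. N)). fst z k \<in> A} \<inter> space P)"
        by (auto simp: B_def)
      also have "\<dots> \<in> sets P"
        by (intro sets.Int measurable_sets[OF I_rv] measurable_sets[OF Zm Ak]) simp
      finally show ?thesis .
    qed
    have "measure P {\<omega> \<in> space P. X (I \<omega>) \<omega> \<in> A} = (\<Sum>k\<in>{..<K}. measure P (B k))"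
      unfolding eq
    proof (rule P.finite_measure_finite_Union)
      show "B ` {..<K} \<subseteq> sets P" using Bs by auto
      show "disjoint_family_on B {..<K}" by (auto simp: disjoint_family_on_def B_def)
    qed simp
    also have "\<dots> = (\<Sum>k\<in>{..<K}. (\<integral>x. indicator A x * H x \<partial>Q) / real K)"
      by (rule sum.cong[OF refl]) (unfold B_def, rule core, auto simp: A)
    also have "\<dots> = (\<integral>x. indicator A x * H x \<partial>Q)" using K0 by simp
    finally show ?thesis .
  qed
  have Icnt: "I \<in> measurable P (count_space {..<K})"
    by (subst measurable_count_space_eq2) (auto simp: I_range intro: measurable_sets[OF I_rv])
  have XIm: "(\<lambda>\<omega>. X (I \<omega>) \<omega>) \<in> measurable P M"
    by (rule measurable_compose_countable'[where f=X, OF X_rv Icnt]) auto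
  have dist: "distr P M (\<lambda>\<omega>. X (I \<omega>) \<omega>) = density Q (\<lambda>x. ennreal (H x))"
  proof (rule measure_eqI)
    show "sets (distr P M (\<lambda>\<omega>. X (I \<omega>) \<omega>)) = sets (density Q (\<lambda>x. ennreal (H x)))" by (simp add: sQ)
    fix A assume "A \<in> sets (distr P M (\<lambda>\<omega>. X (I \<omega>) \<omega>))"
    then have A: "A \<in> sets M" by simp
    then have AQ: "A \<in> sets Q" by (simp add: sQ)
    have iAH: "integrable Q (\<lambda>x. indicator A x * H x)"
      by (intro Q.integrable_const_bound[where B="real K"] borel_measurable_times borel_measurable_indicator AQ Hm)
         (auto simp: indicator_def H0K abs_of_nonneg)
    have "emeasure (distr P M (\<lambda>\<omega>. X (I \<omega>) \<omega>)) A = emeasure P ((\<lambda>\<omega>. X (I \<omega>) \<omega>) -` A \<inter> space P)"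
      by (rule emeasure_distr[OF XIm A])
    also have "\<dots> = ennreal (measure P {\<omega> \<in> space P. X (I \<omega>) \<omega> \<in> A})"
      by (simp add: P.emeasure_eq_measure vimage_def Int_def conj_commute)
    also have "\<dots> = ennreal (\<integral>x. indicator A x * H x \<partial>Q)" by (simp add: tot A)
    also have "\<dots> = (\<integral>\<^sup>+ x. ennreal (indicator A x * H x) \<partial>Q)"
      by (rule nn_integral_eq_integral[symmetric, OF iAH]) (auto simp: H0K)
    also have "\<dots> = (\<integral>\<^sup>+ x. ennreal (H x) * indicator A x \<partial>Q)"
      by (rule nn_integral_cong) (simp add: indicator_def)
    also have "\<dots> = emeasure (density Q (\<lambda>x. ennreal (H x))) A"
      by (rule emeasure_density[symmetric]) (auto simp: measurable_compose[OF Hm measurable_ennreal] AQ)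
    finally show "emeasure (distr P M (\<lambda>\<omega>. X (I \<omega>) \<omega>)) A = emeasure (density Q (\<lambda>x. ennreal (H x))) A" .
  qed
  show ?thesis
  proof (intro conjI allI impI)
    fix f :: "'a \<Rightarrow> real"
    assume fm: "f \<in> borel_measurable M" and fi: "integrable (density M (\<lambda>x. ennreal (p x))) f"
    have fQ: "f \<in> borel_measurable Q" using fm by (subst measurable_cong_sets[OF sQ(1) refl])
    have fiQ: "integrable Q f" using fi by (simp add: Q_def)
    have AEH: "AE x in Q. 0 \<le> H x" by (intro AE_I2) (simp add: H0K)
    have iH: "integrable Q (\<lambda>x. H x *\<^sub>R f x)"
    proof (rule Bochner_Integration.integrable_bound[OF integrable_mult_right[OF fiQ, of "real K"]])
      show "(\<lambda>x. H x *\<^sub>R f x) \<in> borel_measurable Q" using Hm fQ by simp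
      show "AE x in Q. norm (H x *\<^sub>R f x) \<le> norm (real K * f x)"
        by (intro AE_I2) (auto simp: H0K abs_mult intro!: mult_right_mono)
    qed
    have "integrable (distr P M (\<lambda>\<omega>. X (I \<omega>) \<omega>)) f"
      unfolding dist using integrable_density[OF fQ Hm AEH] iH by simp
    then show "integrable P (\<lambda>\<omega>. f (X (I \<omega>) \<omega>))"
      using integrable_distr_eq[OF XIm fm] by simp
    have "(\<integral>\<omega>. f (X (I \<omega>) \<omega>) \<partial>P) = (\<integral>x. f x \<partial>distr P M (\<lambda>\<omega>. X (I \<omega>) \<omega>))"
      by (rule integral_distr[symmetric, OF XIm fm])
    also have "\<dots> = (\<integral>x. H x *\<^sub>R f x \<partial>Q)"
      unfolding dist by (rule integral_density[OF fQ Hm AEH])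
    also have "\<dots> = (\<integral>x. f x * choice_kernel K M N r e p x \<partial>density M (\<lambda>x. ennreal (p x)))"
      by (simp add: Q_def H_def mult.commute)
    finally show "(\<integral>\<omega>. f (X (I \<omega>) \<omega>) \<partial>P) = (\<integral>x. f x * choice_kernel K M N r e p x \<partial>density M (\<lambda>x. ennreal (p x)))" .
  next
    have "density M (\<lambda>x. ennreal (p x * H x)) = density M (\<lambda>x. ennreal (p x) * ennreal (H x))"
      by (rule density_cong) (measurable, measurable, auto simp: p_nn H0K sQ ennreal_mult intro!: AE_I2)
    also have "\<dots> = density Q (\<lambda>x. ennreal (H x))"
      unfolding Q_def by (rule density_density_eq[symmetric]) (auto simp: p_meas HmM)
    finally have "distr P M (\<lambda>\<omega>. X (I \<omega>) \<omega>) = density M (\<lambda>x. ennreal (p x * H x))" using dist by simp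
    moreover have "(\<lambda>x. ennreal (p x * H x)) \<in> borel_measurable M" using p_meas HmM by simp
    ultimately show "distributed P M (\<lambda>\<omega>. X (I \<omega>) \<omega>) (\<lambda>x. ennreal (p x * choice_kernel K M N r e p x))"
      unfolding distributed_def H_def using XIm by simp
  qed
qed


end
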